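(* Let $G$ be a Polish group that is not locally compact. Then every compact subset of $G$ is right Haar null.
   Context: A Polish group is a topological group whose topology is separable and completely metrizable. A set $A\subseteq G$ is right Haar null if there are a Borel set $B\supseteq A$ and a Borel probability measure $\mu$ on $G$ such that $\mu(Bg)=0$ for every $g\in G$. *)

theory Defs
  imports "HOL-Probability.Probability_Measure" "HOL-Algebra.Coset"
begin

definition topological_group :: "('a, 'b) monoid_scheme \<Rightarrow> 'a topology \<Rightarrow> bool" where
  "topological_group G T \<longleftrightarrow>
     group G \<and> topspace T = carrier G \<and>
     continuous_map (prod_topology T T) T (\<lambda>(x, y). x \<otimes>\<^bsub>G\<^esub> y) \<and>
     continuous_map T T (\<lambda>x. inv\<^bsub>G\<^esub> x)"

definition Polish_group :: "('a, 'b) monoid_scheme \<Rightarrow> 'a topology \<Rightarrow> bool" where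
  "Polish_group G T \<longleftrightarrow>
     topological_group G T \<and> separable_space T \<and> completely_metrizable_space T"

definition borel_sets :: "'a topology \<Rightarrow> 'a set set" where
  "borel_sets T = sigma_sets (topspace T) {U. openin T U}"

definition right_Haar_null :: "('a, 'b) monoid_scheme \<Rightarrow> 'a topology \<Rightarrow> 'a set \<Rightarrow> bool" where
  "right_Haar_null G T A \<longleftrightarrow>
     (\<exists>B M. B \<in> borel_sets T \<and> A \<subseteq> B \<and>
        prob_space M \<and> space M = topspace T \<and> sets M = borel_sets T \<and>
        (\<forall>g \<in> carrier G. emeasure M (B #>\<^bsub>G\<^esub> g) = 0))"

end

theory Submission
  imports Defs "HOL-Probability.Probability"
begin

primrec pre :: "(nat \<Rightarrow> bool) \<Rightarrow> nat \<Rightarrow> bool list" where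
  "pre w 0 = []"
| "pre w (Suc n) = w n # pre w n"

lemma length_pre [simp]: "length (pre w n) = n"
  by (induction n) auto

lemma pre_eq: "pre w n = pre w' n \<longleftrightarrow> (\<forall>i<n. w i = w' i)"
  by (induction n) (auto simp: less_Suc_eq)

abbreviation "cm \<equiv> PiM (UNIV :: nat set) (\<lambda>_. measure_pmf (pmf_of_set (UNIV :: bool set)))"

lemma cm_prob: "prob_space cm"
  by (rule prob_space_PiM) (simp add: prob_space_measure_pmf)

lemma space_cm: "space cm = UNIV"
  by (simp add: space_PiM)

lemma comp_meas: "(\<lambda>w. w i) \<in> cm \<rightarrow>\<^sub>M count_space UNIV"
proof -
  have "(\<lambda>w. w i) \<in> cm \<rightarrow>\<^sub>M measure_pmf (pmf_of_set (UNIV :: bool set))"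
    by (rule measurable_component_singleton) simp
  moreover have "sets (measure_pmf (pmf_of_set (UNIV :: bool set))) = sets (count_space UNIV)"
    by simp
  ultimately show ?thesis using measurable_cong_sets by blast
qed

lemma pre_meas: "(\<lambda>w. pre w n) \<in> cm \<rightarrow>\<^sub>M count_space UNIV"
proof (induction n)
  case 0
  then show ?case by simp
next
  case (Suc n)
  have "(\<lambda>w. (\<lambda>b w. b # pre w n) (w n) w) \<in> cm \<rightarrow>\<^sub>M count_space UNIV"
  proof (rule measurable_compose_countable'[where I=UNIV and f="\<lambda>b w. b # pre w n" and g="\<lambda>w. w n"])
    fix b :: bool
    show "(\<lambda>w. b # pre w n) \<in> cm \<rightarrow>\<^sub>M count_space UNIV"
      using measurable_compose[OF Suc.IH, of "\<lambda>s. b # s" "count_space UNIV"] by simp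
  qed (use comp_meas in simp_all)
  then show ?case by simp
qed

lemma cyl_emeasure: "emeasure cm {w \<in> space cm. pre w n = pre w0 n} = ennreal ((1/2) ^ n)"
proof -
  let ?B = "\<lambda>_::nat. measure_pmf (pmf_of_set (UNIV :: bool set))"
  have eq: "{w \<in> space cm. pre w n = pre w0 n} = prod_emb UNIV ?B {..<n} (PiE {..<n} (\<lambda>i. {w0 i}))"
    by (rule Set.set_eqI) (simp add: prod_emb_iff restrict_PiE_iff pre_eq space_cm Pi_iff lessThan_iff Ball_def)
  have "emeasure cm (prod_emb UNIV ?B {..<n} (PiE {..<n} (\<lambda>i. {w0 i}))) = (\<Prod>i\<in>{..<n}. emeasure (?B i) {w0 i})"
    by (rule emeasure_PiM_emb) (auto simp: prob_space_measure_pmf)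
  also have "\<dots> = (\<Prod>i\<in>{..<n}. ennreal (1/2))"
    by (simp add: emeasure_pmf_single)
  also have "\<dots> = ennreal (1/2) ^ n"
    by (simp only: prod_constant card_lessThan)
  also have "\<dots> = ennreal ((1/2) ^ n)"
    by (rule ennreal_power) simp
  finally show ?thesis using eq by simp
qed


locale PG = group G + Metric_space M d for G (structure) and M d +
  fixes K
  assumes carr: "carrier G = M"
  and mult: "continuous_map (prod_topology mtopology mtopology) mtopology (\<lambda>(x, y). x \<otimes> y)"
  and invc: "continuous_map mtopology mtopology (\<lambda>x. inv x)"
  and nlc: "\<not> locally_compact_space mtopology"
  and Kc: "compactin mtopology K" and oneK: "\<one> \<in> K"
  and mcomp: "mcomplete"
begin

lemma KM: "K \<subseteq> carrier G" using compactin_subset_topspace[OF Kc] carr by simp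

lemma rmul: "a \<in> carrier G \<Longrightarrow> continuous_map mtopology mtopology (\<lambda>x. x \<otimes> a)"
proof -
  assume a: "a \<in> carrier G"
  have "continuous_map mtopology (prod_topology mtopology mtopology) (\<lambda>x. (x, a))"
    using a carr by (simp add: continuous_map_paired)
  from continuous_map_compose[OF this mult] show ?thesis by (simp add: o_def)
qed

lemma qmap: "continuous_map (prod_topology mtopology mtopology) mtopology (\<lambda>p. snd p \<otimes> inv (fst p))"
proof -
  have "continuous_map (prod_topology mtopology mtopology) (prod_topology mtopology mtopology) (\<lambda>p. (snd p, inv (fst p)))"
    using invc by (simp add: continuous_map_paired continuous_map_fst continuous_map_snd continuous_map_compose[OF continuous_map_fst invc, unfolded o_def])
  from continuous_map_compose[OF this mult] show ?thesis by (simp add: o_def)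
qed

definition "D = (\<lambda>p. snd p \<otimes> inv (fst p)) ` (K \<times> K)"

lemma D_compact: "compactin mtopology D"
  unfolding D_def
  by (rule image_compactin[OF _ qmap]) (simp add: compactin_Times Kc)

lemma D_closed: "closedin mtopology D"
  by (simp add: D_compact Hausdorff_space_mtopology compactin_imp_closedin)

definition "bad a b \<longleftrightarrow> (\<exists>g\<in>carrier G. a \<in> K #> g \<and> b \<in> K #> g)"

lemma bad_iff:
  assumes a: "a \<in> carrier G" and b: "b \<in> carrier G"
  shows "bad a b \<longleftrightarrow> b \<otimes> inv a \<in> D"
proof
  assume "bad a b"
  then obtain g k1 k2 where g: "g \<in> carrier G" and k: "k1 \<in> K" "k2 \<in> K" and
    "a = k1 \<otimes> g" "b = k2 \<otimes> g" unfolding bad_def r_coset_def by auto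
  moreover have "k1 \<in> carrier G" "k2 \<in> carrier G" using k KM by auto
  ultimately have "b \<otimes> inv a = k2 \<otimes> inv k1"
    using g by (simp add: inv_mult_group m_assoc[symmetric]) (simp add: m_assoc)
  then show "b \<otimes> inv a \<in> D" unfolding D_def using k by force
next
  assume "b \<otimes> inv a \<in> D"
  then obtain k1 k2 where k: "k1 \<in> K" "k2 \<in> K" and e: "b \<otimes> inv a = k2 \<otimes> inv k1"
    unfolding D_def by auto
  have kc: "k1 \<in> carrier G" "k2 \<in> carrier G" using k KM by auto
  define g where "g = inv k1 \<otimes> a"
  have g: "g \<in> carrier G" using kc a by (simp add: g_def)
  have "a = k1 \<otimes> g" using kc a by (simp add: g_def m_assoc[symmetric])
  moreover have "b = k2 \<otimes> g"
  proof -
    have "b = (b \<otimes> inv a) \<otimes> a" using a b by (simp add: m_assoc)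
    also have "\<dots> = k2 \<otimes> g" using e kc a by (simp add: g_def m_assoc)
    finally show ?thesis .
  qed
  ultimately show "bad a b" unfolding bad_def r_coset_def using g k by auto
qed

lemma exists_good:
  assumes c: "c \<in> M" and r: "r > 0"
  shows "\<exists>v\<in>mball c r. \<not> bad c v"
proof (rule ccontr)
  assume "\<not> ?thesis"
  then have H: "\<And>v. v \<in> mball c r \<Longrightarrow> v \<otimes> inv c \<in> D"
    using bad_iff c carr by auto
  have "locally_compact_space mtopology"
    unfolding locally_compact_space_def
  proof
    fix x assume x: "x \<in> topspace mtopology"
    then have xc: "x \<in> carrier G" using carr by simp
    have cc: "c \<in> carrier G" using c carr by simp
    define U where "U = {y \<in> topspace mtopology. y \<otimes> (inv x \<otimes> c) \<in> mball c r}"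
    have "openin mtopology U" unfolding U_def
      by (rule openin_continuous_map_preimage[OF rmul]) (use xc cc in auto)
    moreover have "compactin mtopology ((\<lambda>y. y \<otimes> x) ` D)"
      by (rule image_compactin[OF D_compact rmul[OF xc]])
    moreover have "x \<in> U" using x xc cc c r by (simp add: U_def m_assoc[symmetric])
    moreover have "U \<subseteq> (\<lambda>y. y \<otimes> x) ` D"
    proof
      fix y assume y: "y \<in> U"
      then have yc: "y \<in> carrier G" using carr U_def by auto
      have "y \<otimes> (inv x \<otimes> c) \<otimes> inv c \<in> D" using H y U_def by auto
      moreover have "y \<otimes> (inv x \<otimes> c) \<otimes> inv c = y \<otimes> inv x" using yc xc cc by (simp add: m_assoc)
      moreover have "y = (y \<otimes> inv x) \<otimes> x" using yc xc by (simp add: m_assoc)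
      ultimately show "y \<in> (\<lambda>y. y \<otimes> x) ` D" by auto
    qed
    ultimately show "\<exists>U K. openin mtopology U \<and> compactin mtopology K \<and> x \<in> U \<and> U \<subseteq> K" by blast
  qed
  with nlc show False by simp
qed

definition "SP c r q \<longleftrightarrow> (
   fst q \<in> M \<and> fst (snd (snd q)) \<in> M \<and> 0 < fst (snd q) \<and> 0 < snd (snd (snd q)) \<and>
   fst (snd q) \<le> r/2 \<and> snd (snd (snd q)) \<le> r/2 \<and>
   mcball (fst q) (fst (snd q)) \<subseteq> mcball c r \<and> mcball (fst (snd (snd q))) (snd (snd (snd q))) \<subseteq> mcball c r \<and>
   (\<forall>a\<in>mcball (fst q) (fst (snd q)). \<forall>b\<in>mcball (fst (snd (snd q))) (snd (snd (snd q))). \<not> bad a b))"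

lemma small_ball:
  assumes "openin mtopology U" "x \<in> U" "r > 0"
  shows "\<exists>e. 0 < e \<and> e \<le> r/2 \<and> mcball x e \<subseteq> U \<and> mcball x e \<subseteq> mcball x r"
proof -
  obtain e where e: "e > 0" "mcball x e \<subseteq> U" using assms openin_mtopology_mcball by blast
  show ?thesis
  proof (intro exI conjI)
    show "0 < min e (r/2)" using e assms by simp
    show "min e (r/2) \<le> r/2" by simp
    show "mcball x (min e (r/2)) \<subseteq> U"
      using e(2) mcball_subset_concentric[of "min e (r/2)" e x] by (meson min.cobounded1 order_trans)
    show "mcball x (min e (r/2)) \<subseteq> mcball x r"
      using assms mcball_subset_concentric[of "min e (r/2)" r x] by linarith
  qed
qed

lemma split_exists:
  assumes c: "c \<in> M" and r: "r > 0"
  shows "\<exists>q. SP c r q"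
proof -
  obtain v where v: "v \<in> mball c r" "\<not> bad c v" using exists_good[OF c r] by blast
  define Ob where "Ob = {p \<in> topspace (prod_topology mtopology mtopology). snd p \<otimes> inv (fst p) \<in> M - D}"
  have oMD: "openin mtopology (M - D)" using D_closed unfolding closedin_def by simp
  have "openin (prod_topology mtopology mtopology) Ob" unfolding Ob_def
    by (rule openin_continuous_map_preimage[OF qmap oMD])
  moreover have "(c, v) \<in> Ob"
  proof -
    have vM: "v \<in> M" using v(1) by simp
    then have "v \<otimes> inv c \<in> M" using c carr by (metis m_closed inv_closed)
    moreover have "v \<otimes> inv c \<notin> D" using bad_iff[of c v] v(2) c vM carr by simp
    ultimately show ?thesis unfolding Ob_def topspace_prod_topology topspace_mtopology
      using c vM by simp
  qed
  ultimately obtain U V where UV: "openin mtopology U" "openin mtopology V" "c \<in> U" "v \<in> V" "U \<times> V \<subseteq> Ob"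
    using openin_prod_topology_alt[THEN iffD1, OF \<open>openin (prod_topology mtopology mtopology) Ob\<close>, rule_format, of c v]
      \<open>(c, v) \<in> Ob\<close> by blast
  have o1: "openin mtopology (U \<inter> mball c r)" "openin mtopology (V \<inter> mball c r)"
    using UV(1,2) openin_mball openin_Int by blast+
  obtain e0 where e0: "0 < e0" "e0 \<le> r/2" "mcball c e0 \<subseteq> U \<inter> mball c r"
    using small_ball[OF o1(1), of c r] UV(3) c r by (meson IntI centre_in_mball_iff)
  obtain e1 where e1: "0 < e1" "e1 \<le> r/2" "mcball v e1 \<subseteq> V \<inter> mball c r"
    using small_ball[OF o1(2), of v r] UV(4) v(1) r by blast
  have "SP c r (c, e0, v, e1)"
    unfolding SP_def fst_conv snd_conv
  proof (intro conjI)
    show "c \<in> M" using c .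
    show "v \<in> M" using v(1) by simp
    show "mcball c e0 \<subseteq> mcball c r" using e0(3) mball_subset_mcball by blast
    show "mcball v e1 \<subseteq> mcball c r" using e1(3) mball_subset_mcball by blast
    show "\<forall>a\<in>mcball c e0. \<forall>b\<in>mcball v e1. \<not> bad a b"
    proof (intro ballI)
      fix a b assume a: "a \<in> mcball c e0" and b: "b \<in> mcball v e1"
      have "a \<in> U" using a e0(3) by blast
      moreover have "b \<in> V" using b e1(3) by blast
      ultimately have "(a, b) \<in> Ob" using UV(5) by (meson SigmaI subsetD)
      then have ab: "a \<in> M" "b \<in> M" "b \<otimes> inv a \<notin> D" unfolding Ob_def topspace_prod_topology topspace_mtopology by auto
      then show "\<not> bad a b" using bad_iff[of a b] carr by simp
    qed
  qed (use e0 e1 in \<open>linarith+\<close>)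
  then show ?thesis by blast
qed

definition "spl c r = (SOME q. SP c r q)"

lemma spl: "c \<in> M \<Longrightarrow> r > 0 \<Longrightarrow> SP c r (spl c r)"
  unfolding spl_def using split_exists by (metis someI_ex)

fun node :: "bool list \<Rightarrow> _ \<times> real" where
  "node [] = (\<one>\<^bsub>G\<^esub>, 1)"
| "node (b # s) = (let q = spl (fst (node s)) (snd (node s)) in
      if b then (fst (snd (snd q)), snd (snd (snd q))) else (fst q, fst (snd q)))"

definition "Bl s = mcball (fst (node s)) (snd (node s))"

lemma node_inv: "fst (node s) \<in> M \<and> 0 < snd (node s) \<and> snd (node s) \<le> (1/2) ^ length s"
proof (induction s)
  case Nil
  show ?case using carr one_closed by (simp del: one_closed)
next
  case (Cons b s)
  then have "SP (fst (node s)) (snd (node s)) (spl (fst (node s)) (snd (node s)))"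
    using spl by blast
  then show ?case using Cons unfolding SP_def
    by (cases b) (simp_all add: Let_def)
qed

lemma SPn: "SP (fst (node s)) (snd (node s)) (spl (fst (node s)) (snd (node s)))"
  using spl node_inv by blast

lemma Bl_sub: "Bl (b # s) \<subseteq> Bl s"
  using SPn[of s] unfolding Bl_def SP_def by (cases b) (simp_all add: Let_def)

lemma Bl_cross: "a \<in> Bl (False # s) \<Longrightarrow> b \<in> Bl (True # s) \<Longrightarrow> \<not> bad a b"
  using SPn[of s] unfolding Bl_def SP_def by (simp add: Let_def)

lemma bad_sym: "bad a b \<Longrightarrow> bad b a" unfolding bad_def by blast

definition "fp w = (SOME x. x \<in> (\<Inter>n. Bl (pre w n)))"

lemma Bl_M: "Bl s \<subseteq> M" unfolding Bl_def by auto

lemma fp_in: "fp w \<in> Bl (pre w n)"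
proof -
  let ?C = "\<lambda>n. Bl (pre w n)"
  have "\<Inter> (range ?C) \<noteq> {}"
  proof (rule mcomp[unfolded mcomplete_nest, rule_format], intro conjI allI impI)
    show "closedin mtopology (?C n)" for n unfolding Bl_def by simp
    show "?C n \<noteq> {}" for n unfolding Bl_def using node_inv[of "pre w n"]
      by (metis centre_in_mcball_iff empty_iff less_le)
    show "decseq ?C" by (rule decseq_SucI) (simp add: Bl_sub)
    fix e :: real assume e: "e > 0"
    obtain n where n: "(1/2::real) ^ n < e" using real_arch_pow_inv[OF e, of "1/2"] by auto
    have "?C n \<subseteq> mcball (fst (node (pre w n))) e"
      unfolding Bl_def using node_inv[of "pre w n"] n by (intro mcball_subset_concentric) simp
    then show "\<exists>n a. ?C n \<subseteq> mcball a e" by blast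
  qed
  then have "\<exists>x. x \<in> (\<Inter>n. ?C n)" by blast
  from someI_ex[OF this] show ?thesis unfolding fp_def by blast
qed

lemma fp_M: "fp w \<in> M" using fp_in[of w 0] Bl_M by blast

lemma fp_open:
  assumes U: "openin mtopology U"
  shows "{w. fp w \<in> U} = (\<Union>n. {w. Bl (pre w n) \<subseteq> U})"
proof
  show "(\<Union>n. {w. Bl (pre w n) \<subseteq> U}) \<subseteq> {w. fp w \<in> U}" using fp_in by blast
  show "{w. fp w \<in> U} \<subseteq> (\<Union>n. {w. Bl (pre w n) \<subseteq> U})"
  proof
    fix w assume "w \<in> {w. fp w \<in> U}"
    then have wU: "fp w \<in> U" by simp
    obtain e where e: "e > 0" "mball (fp w) e \<subseteq> U" using U wU openin_mtopology by blast
    obtain n where n: "(1/2::real) ^ n < e/2" using real_arch_pow_inv[of "e/2" "1/2"] e by auto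
    let ?c = "fst (node (pre w n))" and ?r = "snd (node (pre w n))"
    have r: "?r < e/2" using node_inv[of "pre w n"] n by simp
    have c: "?c \<in> M" using node_inv by blast
    have fw: "d (fp w) ?c \<le> ?r" using fp_in[of w n] unfolding Bl_def by (simp add: commute)
    have "Bl (pre w n) \<subseteq> mball (fp w) e"
    proof
      fix y assume "y \<in> Bl (pre w n)"
      then have y: "y \<in> M" "d ?c y \<le> ?r" unfolding Bl_def by auto
      have "d (fp w) y \<le> d (fp w) ?c + d ?c y" using triangle[OF fp_M c y(1)] .
      then have "d (fp w) y < e" using fw y r by linarith
      then show "y \<in> mball (fp w) e" using y fp_M by simp
    qed
    then show "w \<in> (\<Union>n. {w. Bl (pre w n) \<subseteq> U})" using e by blast
  qed
qed

lemma fp_unique: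
  assumes g: "g \<in> carrier G" and w: "fp w \<in> K #> g" and w': "fp w' \<in> K #> g"
  shows "w = w'"
proof (rule ccontr)
  assume "w \<noteq> w'"
  then have ex: "\<exists>i. w i \<noteq> w' i" by auto
  define n where "n = (LEAST i. w i \<noteq> w' i)"
  have wn: "w n \<noteq> w' n" using LeastI_ex[OF ex] n_def by simp
  have "\<forall>i<n. w i = w' i" using not_less_Least n_def by blast
  then have ps: "pre w n = pre w' n" using pre_eq by blast
  have b: "bad (fp w) (fp w')" unfolding bad_def using g w w' by blast
  have i1: "fp w \<in> Bl (w n # pre w n)" using fp_in[of w "Suc n"] by simp
  have i2: "fp w' \<in> Bl (w' n # pre w n)" using fp_in[of w' "Suc n"] ps by simp
  show False
  proof (cases "w n")
    case True
    then have "\<not> w' n" using wn by simp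
    then show False using Bl_cross[of "fp w'" "pre w n" "fp w"] i1 i2 True b bad_sym by auto
  next
    case False
    then have "w' n" using wn by simp
    then show False using Bl_cross[of "fp w" "pre w n" "fp w'"] i1 i2 False b by auto
  qed
qed

lemma fp_meas: "fp \<in> cm \<rightarrow>\<^sub>M sigma M {U. openin mtopology U}"
proof (rule measurable_measure_of)
  show "fp \<in> space cm \<rightarrow> M" using fp_M by blast
  show "{U. openin mtopology U} \<subseteq> Pow M" using openin_mtopology by auto
  fix U assume "U \<in> {U. openin mtopology U}"
  then have U: "openin mtopology U" by simp
  have "fp -` U \<inter> space cm = (\<Union>n. (\<lambda>w. pre w n) -` {s. Bl s \<subseteq> U} \<inter> space cm)"
    using fp_open[OF U] by (auto simp: space_cm)
  also have "\<dots> \<in> sets cm"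
  proof -
    have H: "\<And>n. (\<lambda>w. pre w n) -` {s. Bl s \<subseteq> U} \<inter> space cm \<in> sets cm"
      by (rule measurable_sets[OF pre_meas]) simp
    show ?thesis by (rule sets.countable_UN) (use H in blast)
  qed
  finally show "fp -` U \<inter> space cm \<in> sets cm" .
qed


lemma closed_borel: "closedin mtopology C \<Longrightarrow> C \<in> sigma_sets M {U. openin mtopology U}"
proof -
  assume C: "closedin mtopology C"
  then have o: "openin mtopology (M - C)" and CM: "C \<subseteq> M" unfolding closedin_def by auto
  have "M - C \<in> sigma_sets M {U. openin mtopology U}" using o by (intro sigma_sets.Basic) simp
  then have "M - (M - C) \<in> sigma_sets M {U. openin mtopology U}" by (rule sigma_sets.Compl)
  moreover have "M - (M - C) = C" using CM by blast
  ultimately show ?thesis by simp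
qed

lemma coset_compact: "g \<in> carrier G \<Longrightarrow> compactin mtopology (K #> g)"
proof -
  assume g: "g \<in> carrier G"
  have "K #> g = (\<lambda>x. x \<otimes> g) ` K" unfolding r_coset_def by auto
  then show ?thesis using image_compactin[OF Kc rmul[OF g]] by simp
qed

lemma compact_borel: "compactin mtopology C \<Longrightarrow> C \<in> sigma_sets M {U. openin mtopology U}"
  by (intro closed_borel compactin_imp_closedin Hausdorff_space_mtopology)

lemma sets_sig: "sets (sigma M {U. openin mtopology U}) = sigma_sets M {U. openin mtopology U}"
  by (rule sets_measure_of) (use openin_mtopology in auto)

lemma space_sig: "space (sigma M {U. openin mtopology U}) = M"
  by (rule space_measure_of) (use openin_mtopology in auto)

lemma null_coset:
  assumes g: "g \<in> carrier G"
  shows "emeasure (distr cm (sigma M {U. openin mtopology U}) fp) (K #> g) = 0"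
proof -
  interpret P: prob_space cm by (rule cm_prob)
  have KgS: "K #> g \<in> sets (sigma M {U. openin mtopology U})"
    unfolding sets_sig by (rule compact_borel[OF coset_compact[OF g]])
  define S where "S = fp -` (K #> g) \<inter> space cm"
  have e: "emeasure (distr cm (sigma M {U. openin mtopology U}) fp) (K #> g) = emeasure cm S"
    unfolding S_def by (rule emeasure_distr[OF fp_meas KgS])
  have Ssets: "S \<in> sets cm" unfolding S_def by (rule measurable_sets[OF fp_meas KgS])
  have "emeasure cm S = 0"
  proof (cases "S = {}")
    case True then show ?thesis by simp
  next
    case False
    then obtain w0 where w0: "w0 \<in> S" by blast
    have le: "measure cm S \<le> (1/2) ^ n" for n
    proof -
      have sub: "S \<subseteq> {w \<in> space cm. pre w n = pre w0 n}"
        using fp_unique[OF g] w0 unfolding S_def by blast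
      have cs: "{w \<in> space cm. pre w n = pre w0 n} \<in> sets cm"
      proof -
        have "(\<lambda>w. pre w n) -` {pre w0 n} \<inter> space cm \<in> sets cm"
          by (rule measurable_sets[OF pre_meas]) simp
        moreover have "(\<lambda>w. pre w n) -` {pre w0 n} \<inter> space cm = {w \<in> space cm. pre w n = pre w0 n}" by blast
        ultimately show ?thesis by simp
      qed
      have "emeasure cm S \<le> ennreal ((1/2) ^ n)"
        using emeasure_mono[OF sub cs] cyl_emeasure[of n w0] by simp
      then show ?thesis using P.emeasure_eq_measure[of S] by simp
    qed
    have "measure cm S = 0"
    proof (rule ccontr)
      assume "measure cm S \<noteq> 0"
      then have pos: "measure cm S > 0" using measure_nonneg[of cm S] by linarith
      obtain n where "(1/2::real) ^ n < measure cm S" using real_arch_pow_inv[OF pos, of "1/2"] by auto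
      with le[of n] show False by simp
    qed
    then show ?thesis using P.emeasure_eq_measure[of S] by simp
  qed
  then show ?thesis using e by simp
qed

lemma main: "right_Haar_null G mtopology K"
  unfolding right_Haar_null_def borel_sets_def topspace_mtopology
proof (intro exI conjI)
  show "K \<in> sigma_sets M {U. openin mtopology U}" by (rule compact_borel[OF Kc])
  show "K \<subseteq> K" by simp
  show "prob_space (distr cm (sigma M {U. openin mtopology U}) fp)"
    by (rule prob_space.prob_space_distr[OF cm_prob fp_meas])
  show "space (distr cm (sigma M {U. openin mtopology U}) fp) = M"
    by (simp add: space_sig)
  show "sets (distr cm (sigma M {U. openin mtopology U}) fp) = sigma_sets M {U. openin mtopology U}"
    by (simp add: sets_sig)
  show "\<forall>g\<in>carrier G. emeasure (distr cm (sigma M {U. openin mtopology U}) fp) (K #> g) = 0"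
    using null_coset by blast
qed


end

lemma rHn_mono: "right_Haar_null G T A \<Longrightarrow> B \<subseteq> A \<Longrightarrow> right_Haar_null G T B"
  unfolding right_Haar_null_def by blast

theorem proposition6p7:
  fixes G :: "('a, 'b) monoid_scheme" and T :: "'a topology" and K :: "'a set"
  assumes "Polish_group G T"
    and "\<not> locally_compact_space T"
    and "compactin T K"
  shows "right_Haar_null G T K"
proof -
  have tg: "topological_group G T" and cms: "completely_metrizable_space T"
    using assms(1) unfolding Polish_group_def by auto
  obtain M d where ms: "Metric_space M d" and mc: "Metric_space.mcomplete M d"
    and Teq: "T = Metric_space.mtopology M d"
    using cms unfolding completely_metrizable_space_def by blast
  have grp: "group G" and top: "topspace T = carrier G"
    and mult: "continuous_map (prod_topology T T) T (\<lambda>(x, y). x \<otimes>\<^bsub>G\<^esub> y)"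
    and invc: "continuous_map T T (\<lambda>x. inv\<^bsub>G\<^esub> x)"
    using tg unfolding topological_group_def by auto
  have carr: "carrier G = M" using top Teq Metric_space.topspace_mtopology[OF ms] by simp
  define K' where "K' = insert \<one>\<^bsub>G\<^esub> K"
  have oneT: "\<one>\<^bsub>G\<^esub> \<in> topspace T" using top monoid.one_closed[OF group.is_monoid[OF grp]] by simp
  have "compactin T ({\<one>\<^bsub>G\<^esub>} \<union> K)"
    by (rule compactin_Un[OF finite_imp_compactin assms(3)]) (use oneT in auto)
  then have K'c: "compactin T K'" unfolding K'_def by simp
  have a2: "continuous_map (prod_topology (Metric_space.mtopology M d) (Metric_space.mtopology M d)) (Metric_space.mtopology M d) (\<lambda>(x, y). x \<otimes>\<^bsub>G\<^esub> y)"
    using mult Teq by simp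
  have a3: "continuous_map (Metric_space.mtopology M d) (Metric_space.mtopology M d) (\<lambda>x. inv\<^bsub>G\<^esub> x)"
    using invc Teq by simp
  have a4: "\<not> locally_compact_space (Metric_space.mtopology M d)" using assms(2) Teq by simp
  have a5: "compactin (Metric_space.mtopology M d) K'" using K'c Teq by simp
  have a6: "\<one>\<^bsub>G\<^esub> \<in> K'" unfolding K'_def by simp
  interpret P: PG G M d K'
    by (rule PG.intro[OF grp ms PG_axioms.intro[OF carr a2 a3 a4 a5 a6 mc]])
  have "right_Haar_null G T K'" using P.main Teq by simp
  then show ?thesis by (rule rHn_mono) (auto simp: K'_def)
qed

end
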